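(* Let $n,m\ge 2$ and consider the LC orbit $\mathcal{O}(K_{n,m})$ of the complete bipartite graph, with isomorphic graphs identified. If $n\ne m$, the number of isomorphism classes of graphs in $\mathcal{O}(K_{n,m})$ is $6$; if $n=m$, it is $4$.
   Context: The local complement $c_v(G)$ complements the edges among the neighbours of $v$. $\mathcal{O}(G)$ is the set of all graphs on the labelled vertex set $V(G)$ obtainable from $G$ by finite sequences of local complements. *)

theory Defs
  imports Main
begin

text \<open>A simple graph on a labelled vertex set V is given by a symmetric,
irreflexive edge relation E contained in V x V.\<close>

definition nbhd :: "('a \<times> 'a) set \<Rightarrow> 'a \<Rightarrow> 'a set" where
  "nbhd E v = {u. (v, u) \<in> E}"

definition local_compl :: "('a \<times> 'a) set \<Rightarrow> 'a \<Rightarrow> ('a \<times> 'a) set" where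
  "local_compl E v =
     {(x, y). ((x, y) \<in> E) \<noteq> (x \<in> nbhd E v \<and> y \<in> nbhd E v \<and> x \<noteq> y)}"

inductive_set lc_orbit :: "'a set \<Rightarrow> ('a \<times> 'a) set \<Rightarrow> ('a \<times> 'a) set set"
  for V :: "'a set" and E0 :: "('a \<times> 'a) set" where
  base: "E0 \<in> lc_orbit V E0"
| step: "E \<in> lc_orbit V E0 \<Longrightarrow> v \<in> V \<Longrightarrow> local_compl E v \<in> lc_orbit V E0"

definition graph_iso :: "'a set \<Rightarrow> ('a \<times> 'a) set \<Rightarrow> ('a \<times> 'a) set \<Rightarrow> bool" where
  "graph_iso V E E' \<longleftrightarrow>
     (\<exists>f. bij_betw f V V \<and> (\<forall>x\<in>V. \<forall>y\<in>V. (x, y) \<in> E \<longleftrightarrow> (f x, f y) \<in> E'))"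

definition num_iso_classes :: "'a set \<Rightarrow> ('a \<times> 'a) set set \<Rightarrow> nat" where
  "num_iso_classes V S = card (S // {(E, E'). E \<in> S \<and> E' \<in> S \<and> graph_iso V E E'})"

definition Kbip_vertices :: "nat \<Rightarrow> nat \<Rightarrow> nat set" where
  "Kbip_vertices n m = {0..<n+m}"

definition Kbip :: "nat \<Rightarrow> nat \<Rightarrow> (nat \<times> nat) set" where
  "Kbip n m = {(i, j). (i < n \<and> n \<le> j \<and> j < n + m) \<or> (j < n \<and> n \<le> i \<and> i < n + m)}"

end

theory Submission
  imports Defs
begin


definition KA :: "nat \<Rightarrow> nat \<Rightarrow> (nat \<times> nat) set" where
 "KA n m = {(x,y). (x,y)\<in>Kbip n m \<or> (x<n \<and> y<n \<and> x\<noteq>y)}"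
definition KB :: "nat \<Rightarrow> nat \<Rightarrow> (nat \<times> nat) set" where
 "KB n m = {(x,y). (x,y)\<in>Kbip n m \<or> (n\<le>x \<and> x<n+m \<and> n\<le>y \<and> y<n+m \<and> x\<noteq>y)}"
definition SA :: "nat \<Rightarrow> nat \<Rightarrow> nat \<Rightarrow> (nat \<times> nat) set" where
 "SA n m a = {(x,y). (x=a \<and> y<n+m \<and> y\<noteq>a) \<or> (y=a \<and> x<n+m \<and> x\<noteq>a) \<or> (n\<le>x \<and> x<n+m \<and> n\<le>y \<and> y<n+m \<and> x\<noteq>y)}"
definition SB :: "nat \<Rightarrow> nat \<Rightarrow> nat \<Rightarrow> (nat \<times> nat) set" where
 "SB n m b = {(x,y). (x=b \<and> y<n+m \<and> y\<noteq>b) \<or> (y=b \<and> x<n+m \<and> x\<noteq>b) \<or> (x<n \<and> y<n \<and> x\<noteq>y)}"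
definition DD :: "nat \<Rightarrow> nat \<Rightarrow> nat \<Rightarrow> nat \<Rightarrow> (nat \<times> nat) set" where
 "DD n m a b = {(x,y). (x=a \<and> y<n \<and> y\<noteq>a) \<or> (y=a \<and> x<n \<and> x\<noteq>a) \<or> (x=a\<and>y=b) \<or> (x=b\<and>y=a)
    \<or> (x=b \<and> n\<le>y \<and> y<n+m \<and> y\<noteq>b) \<or> (y=b \<and> n\<le>x \<and> x<n+m \<and> x\<noteq>b)}"

lemmas gdefs = KA_def KB_def SA_def SB_def DD_def Kbip_def local_compl_def nbhd_def

lemma lc_K_A: "v<n \<Longrightarrow> local_compl (Kbip n m) v = KB n m" by (auto simp: gdefs)
lemma lc_K_B: "n\<le>v \<Longrightarrow> v<n+m \<Longrightarrow> local_compl (Kbip n m) v = KA n m" by (auto simp: gdefs)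
lemma lc_KA_A: "v<n \<Longrightarrow> local_compl (KA n m) v = SA n m v" by (auto simp: gdefs)
lemma lc_KA_B: "n\<le>v \<Longrightarrow> v<n+m \<Longrightarrow> local_compl (KA n m) v = Kbip n m" by (auto simp: gdefs)
lemma lc_KB_A: "v<n \<Longrightarrow> local_compl (KB n m) v = Kbip n m" by (auto simp: gdefs)
lemma lc_KB_B: "n\<le>v \<Longrightarrow> v<n+m \<Longrightarrow> local_compl (KB n m) v = SB n m v" by (auto simp: gdefs)
lemma lc_SA_a: "a<n \<Longrightarrow> local_compl (SA n m a) a = KA n m" by (auto simp: gdefs)
lemma lc_SA_A: "a<n \<Longrightarrow> v<n \<Longrightarrow> v\<noteq>a \<Longrightarrow> local_compl (SA n m a) v = SA n m a" by (auto simp: gdefs)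
lemma lc_SA_B: "a<n \<Longrightarrow> n\<le>v \<Longrightarrow> v<n+m \<Longrightarrow> local_compl (SA n m a) v = DD n m a v" by (auto simp: gdefs)
lemma lc_SB_b: "n\<le>b \<Longrightarrow> b<n+m \<Longrightarrow> local_compl (SB n m b) b = KB n m" by (auto simp: gdefs)
lemma lc_SB_B: "n\<le>b \<Longrightarrow> b<n+m \<Longrightarrow> n\<le>v \<Longrightarrow> v<n+m \<Longrightarrow> v\<noteq>b \<Longrightarrow> local_compl (SB n m b) v = SB n m b" by (auto simp: gdefs)
lemma lc_SB_A: "n\<le>b \<Longrightarrow> b<n+m \<Longrightarrow> v<n \<Longrightarrow> local_compl (SB n m b) v = DD n m v b" by (auto simp: gdefs)
lemma lc_DD_a: "a<n \<Longrightarrow> n\<le>b \<Longrightarrow> b<n+m \<Longrightarrow> local_compl (DD n m a b) a = SB n m b" by (auto simp: gdefs)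
lemma lc_DD_b: "a<n \<Longrightarrow> n\<le>b \<Longrightarrow> b<n+m \<Longrightarrow> local_compl (DD n m a b) b = SA n m a" by (auto simp: gdefs)
lemma lc_DD_o: "a<n \<Longrightarrow> n\<le>b \<Longrightarrow> b<n+m \<Longrightarrow> v\<noteq>a \<Longrightarrow> v\<noteq>b \<Longrightarrow> v<n+m \<Longrightarrow> local_compl (DD n m a b) v = DD n m a b" by (auto simp: gdefs)


definition LCO :: "nat \<Rightarrow> nat \<Rightarrow> (nat \<times> nat) set set" where
 "LCO n m = {Kbip n m, KA n m, KB n m} \<union> {DD n m a b | a b. a<n \<and> n\<le>b \<and> b<n+m}
    \<union> SA n m ` {..<n} \<union> SB n m ` {n..<n+m}"

lemma orbit_sub_LCO:
  assumes "E \<in> lc_orbit (Kbip_vertices n m) (Kbip n m)"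
  shows "E \<in> LCO n m"
  using assms
proof induction
  case base
  then show ?case by (simp add: LCO_def)
next
  case (step E v)
  have v: "v < n+m" using step.hyps(2) by (simp add: Kbip_vertices_def)
  from step.IH consider "E = Kbip n m" | "E = KA n m" | "E = KB n m"
    | a b where "a<n" "n\<le>b" "b<n+m" "E = DD n m a b"
    | a where "a<n" "E = SA n m a" | b where "n\<le>b" "b<n+m" "E = SB n m b"
    unfolding LCO_def by auto
  then show ?case
  proof cases
    case 1 then show ?thesis using v
      by (cases "v<n") (auto simp: LCO_def lc_K_A lc_K_B)
  next
    case 2 then show ?thesis using v
      by (cases "v<n") (auto simp: LCO_def lc_KA_A lc_KA_B)
  next
    case 3 then show ?thesis using v
      by (cases "v<n") (auto simp: LCO_def lc_KB_A lc_KB_B)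
  next
    case (4 a b) then show ?thesis using v
      by (cases "v=a"; cases "v=b") (auto simp: LCO_def lc_DD_a lc_DD_b lc_DD_o)
  next
    case (5 a) then show ?thesis using v
      by (cases "v=a"; cases "v<n") (auto simp: LCO_def lc_SA_a lc_SA_A lc_SA_B)
  next
    case (6 b) then show ?thesis using v
      by (cases "v=b"; cases "v<n") (auto simp: LCO_def lc_SB_b lc_SB_B lc_SB_A)
  qed
qed

lemma LCO_sub_orbit:
  assumes "n \<ge> 1" "m \<ge> 1"
  shows "LCO n m \<subseteq> lc_orbit (Kbip_vertices n m) (Kbip n m)"
proof -
  let ?O = "lc_orbit (Kbip_vertices n m) (Kbip n m)"
  have K: "Kbip n m \<in> ?O" by (rule lc_orbit.base)
  have KB: "KB n m \<in> ?O"
    using lc_orbit.step[OF K, of 0] assms by (simp add: Kbip_vertices_def lc_K_A)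
  have KA: "KA n m \<in> ?O"
    using lc_orbit.step[OF K, of n] assms by (simp add: Kbip_vertices_def lc_K_B)
  have SA: "SA n m a \<in> ?O" if "a<n" for a
    using lc_orbit.step[OF KA, of a] that by (simp add: Kbip_vertices_def lc_KA_A)
  have SB: "SB n m b \<in> ?O" if "n\<le>b" "b<n+m" for b
    using lc_orbit.step[OF KB, of b] that by (simp add: Kbip_vertices_def lc_KB_B)
  have DD: "DD n m a b \<in> ?O" if "a<n" "n\<le>b" "b<n+m" for a b
    using lc_orbit.step[OF SA[OF that(1)], of b] that by (simp add: Kbip_vertices_def lc_SA_B)
  show ?thesis unfolding LCO_def using K KA KB SA SB DD by auto
qed

lemma orbit_eq:
  assumes "n \<ge> 1" "m \<ge> 1"
  shows "lc_orbit (Kbip_vertices n m) (Kbip n m) = LCO n m"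
  using orbit_sub_LCO LCO_sub_orbit[OF assms] by blast


definition univs :: "nat set \<Rightarrow> (nat \<times> nat) set \<Rightarrow> nat set" where
  "univs V E = {u\<in>V. \<forall>x\<in>V. x \<noteq> u \<longrightarrow> (u,x) \<in> E}"
definition leaves :: "nat set \<Rightarrow> (nat \<times> nat) set \<Rightarrow> nat set" where
  "leaves V E = {u\<in>V. \<exists>!x. x\<in>V \<and> (u,x) \<in> E}"
definition tinv :: "nat set \<Rightarrow> (nat \<times> nat) set \<Rightarrow> nat \<times> nat" where
  "tinv V E = (card (univs V E), card (leaves V E))"

lemma bij_filter:
  assumes "bij_betw f V V" "\<And>u. u\<in>V \<Longrightarrow> P u \<longleftrightarrow> Q (f u)"
  shows "card {u\<in>V. Q u} = card {u\<in>V. P u}"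
proof -
  have "{u\<in>V. Q u} = f ` {u\<in>V. P u}"
  proof
    show "{u\<in>V. Q u} \<subseteq> f ` {u\<in>V. P u}"
    proof
      fix w assume w: "w \<in> {u\<in>V. Q u}"
      then have "w \<in> f ` V" using assms(1) by (simp add: bij_betw_def)
      then obtain u where u: "u\<in>V" "w = f u" by blast
      then show "w \<in> f ` {u\<in>V. P u}" using w assms(2) by blast
    qed
    show "f ` {u\<in>V. P u} \<subseteq> {u\<in>V. Q u}"
      using assms bij_betw_apply by fastforce
  qed
  moreover have "inj_on f {u\<in>V. P u}"
    using assms(1) by (rule inj_on_subset[OF bij_betw_imp_inj_on]) auto
  ultimately show ?thesis by (simp add: card_image)
qed

lemma iso_tinv:
  assumes "graph_iso V E E'"
  shows "tinv V E = tinv V E'"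
proof -
  obtain f where f: "bij_betw f V V" and adj: "\<And>x y. x\<in>V \<Longrightarrow> y\<in>V \<Longrightarrow> (x, y) \<in> E \<longleftrightarrow> (f x, f y) \<in> E'"
    using assms unfolding graph_iso_def by blast
  have img: "f ` V = V" using f by (simp add: bij_betw_def)
  have fV: "\<And>x. x\<in>V \<Longrightarrow> f x \<in> V" using img by auto
  have sur: "\<And>y. y\<in>V \<Longrightarrow> \<exists>x\<in>V. y = f x" using img by auto
  have injeq: "\<And>x y. x\<in>V \<Longrightarrow> y\<in>V \<Longrightarrow> f x = f y \<longleftrightarrow> x = y"
    using f by (auto simp: bij_betw_def dest: inj_onD)
  have ballf: "\<And>R. (\<forall>y\<in>V. R y) \<longleftrightarrow> (\<forall>x\<in>V. R (f x))"
    using fV sur by metis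
  have exf: "\<And>R. (\<exists>!y. y\<in>V \<and> R y) \<longleftrightarrow> (\<exists>!x. x\<in>V \<and> R (f x))"
  proof -
    fix R
    show "(\<exists>!y. y\<in>V \<and> R y) \<longleftrightarrow> (\<exists>!x. x\<in>V \<and> R (f x))"
    proof
      assume "\<exists>!y. y\<in>V \<and> R y"
      then obtain y where y: "y\<in>V" "R y" "\<And>z. z\<in>V \<Longrightarrow> R z \<Longrightarrow> z = y" by blast
      obtain x where x: "x\<in>V" "y = f x" using sur[OF y(1)] by blast
      show "\<exists>!x. x\<in>V \<and> R (f x)"
      proof (rule ex1I[of _ x])
        show "x\<in>V \<and> R (f x)" using x y(2) by simp
        fix z assume z: "z\<in>V \<and> R (f z)"
        then have "f z = f x" using y(3)[of "f z"] x fV by simp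
        then show "z = x" using injeq[of z x] z x(1) by simp
      qed
    next
      assume "\<exists>!x. x\<in>V \<and> R (f x)"
      then obtain x where x: "x\<in>V" "R (f x)" "\<And>z. z\<in>V \<Longrightarrow> R (f z) \<Longrightarrow> z = x" by blast
      show "\<exists>!y. y\<in>V \<and> R y"
      proof (rule ex1I[of _ "f x"])
        show "f x\<in>V \<and> R (f x)" using x(1,2) fV by simp
        fix z assume z: "z\<in>V \<and> R z"
        then obtain w where w: "w\<in>V" "z = f w" using sur by blast
        then show "z = f x" using x(3)[of w] z by simp
      qed
    qed
  qed
  have U: "card (univs V E') = card (univs V E)" unfolding univs_def
  proof (rule bij_filter[OF f])
    fix u assume u: "u\<in>V"
    have "(\<forall>y\<in>V. y \<noteq> f u \<longrightarrow> (f u, y) \<in> E') \<longleftrightarrow> (\<forall>x\<in>V. f x \<noteq> f u \<longrightarrow> (f u, f x) \<in> E')"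
      by (rule ballf)
    also have "\<dots> \<longleftrightarrow> (\<forall>x\<in>V. x \<noteq> u \<longrightarrow> (u, x) \<in> E)"
      using u injeq adj by simp
    finally show "(\<forall>x\<in>V. x \<noteq> u \<longrightarrow> (u, x) \<in> E) \<longleftrightarrow> (\<forall>y\<in>V. y \<noteq> f u \<longrightarrow> (f u, y) \<in> E')"
      by simp
  qed
  have L: "card (leaves V E') = card (leaves V E)" unfolding leaves_def
  proof (rule bij_filter[OF f])
    fix u assume u: "u\<in>V"
    have 1: "(\<exists>!y. y\<in>V \<and> (f u, y) \<in> E') \<longleftrightarrow> (\<exists>!x. x\<in>V \<and> (f u, f x) \<in> E')"
      by (rule exf)
    have 3: "\<And>x. (x\<in>V \<and> (f u, f x) \<in> E') \<longleftrightarrow> (x\<in>V \<and> (u, x) \<in> E)" using u adj by blast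
    have 2: "(\<exists>!x. x\<in>V \<and> (f u, f x) \<in> E') \<longleftrightarrow> (\<exists>!x. x\<in>V \<and> (u, x) \<in> E)"
      apply (rule arg_cong[where f=Ex1])
      apply (rule ext)
      apply (rule 3)
      done
    show "(\<exists>!x. x\<in>V \<and> (u, x) \<in> E) \<longleftrightarrow> (\<exists>!y. y\<in>V \<and> (f u, y) \<in> E')"
      unfolding 1 2 by (rule refl)
  qed
  show ?thesis unfolding tinv_def using U L by simp
qed

lemma graph_iso_refl: "graph_iso V E E"
  unfolding graph_iso_def by (rule exI[of _ id]) auto

lemma graph_iso_trans:
  assumes "graph_iso V E1 E2" "graph_iso V E2 E3" shows "graph_iso V E1 E3"
proof -
  obtain f where f: "bij_betw f V V" "\<forall>x\<in>V. \<forall>y\<in>V. (x, y) \<in> E1 \<longleftrightarrow> (f x, f y) \<in> E2"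
    using assms(1) unfolding graph_iso_def by blast
  obtain g where g: "bij_betw g V V" "\<forall>x\<in>V. \<forall>y\<in>V. (x, y) \<in> E2 \<longleftrightarrow> (g x, g y) \<in> E3"
    using assms(2) unfolding graph_iso_def by blast
  have fV: "\<And>x. x\<in>V \<Longrightarrow> f x \<in> V" using f(1) by (auto simp: bij_betw_def)
  show ?thesis unfolding graph_iso_def
    apply (rule exI[of _ "g \<circ> f"])
    using bij_betw_trans[OF f(1) g(1)] f(2) g(2) fV by auto
qed

lemma graph_iso_sym:
  assumes "graph_iso V E1 E2" shows "graph_iso V E2 E1"
proof -
  obtain f where f: "bij_betw f V V" "\<forall>x\<in>V. \<forall>y\<in>V. (x, y) \<in> E1 \<longleftrightarrow> (f x, f y) \<in> E2"
    using assms(1) unfolding graph_iso_def by blast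
  let ?g = "inv_into V f"
  have g: "bij_betw ?g V V" using bij_betw_inv_into[OF f(1)] .
  have gV: "\<And>x. x\<in>V \<Longrightarrow> ?g x \<in> V" using g by (auto simp: bij_betw_def)
  have fg: "\<And>x. x\<in>V \<Longrightarrow> f (?g x) = x" using f(1) by (simp add: bij_betw_def f_inv_into_f)
  show ?thesis unfolding graph_iso_def
    apply (rule exI[of _ ?g])
    using g f(2) gV fg by metis
qed

definition sw :: "nat \<Rightarrow> nat \<Rightarrow> nat \<Rightarrow> nat" where
  "sw a b x = (if x = a then b else if x = b then a else x)"

lemma sw_bij: "a \<in> V \<Longrightarrow> b \<in> V \<Longrightarrow> bij_betw (sw a b) V V"
  by (rule bij_betw_byWitness[of _ "sw a b"]) (auto simp: sw_def)

lemma iso_by: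
  assumes "bij_betw f V V" "\<And>x y. x\<in>V \<Longrightarrow> y\<in>V \<Longrightarrow> (x, y) \<in> E \<longleftrightarrow> (f x, f y) \<in> E'"
  shows "graph_iso V E E'"
  unfolding graph_iso_def using assms by blast

lemma iso_SA:
  assumes "a<n" "a'<n" shows "graph_iso {0..<n+m} (SA n m a) (SA n m a')"
  apply (rule iso_by[OF sw_bij[of a _ a']])
  using assms by (auto simp: SA_def sw_def)

lemma iso_SB:
  assumes "n\<le>b" "b<n+m" "n\<le>b'" "b'<n+m" shows "graph_iso {0..<n+m} (SB n m b) (SB n m b')"
  apply (rule iso_by[OF sw_bij[of b _ b']])
  using assms by (auto simp: SB_def sw_def)

lemma iso_DD1:
  assumes "a<n" "a'<n" "n\<le>b" "b<n+m" shows "graph_iso {0..<n+m} (DD n m a b) (DD n m a' b)"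
  apply (rule iso_by[OF sw_bij[of a _ a']])
  using assms by (auto simp: DD_def sw_def)

lemma iso_DD2:
  assumes "a<n" "n\<le>b" "b<n+m" "n\<le>b'" "b'<n+m" shows "graph_iso {0..<n+m} (DD n m a b) (DD n m a b')"
  apply (rule iso_by[OF sw_bij[of b _ b']])
  using assms by (auto simp: DD_def sw_def)

definition ps :: "nat \<Rightarrow> nat \<Rightarrow> nat" where
  "ps n x = (if x < n then x + n else if x < n + n then x - n else x)"

lemma ps_bij: "bij_betw (ps n) {0..<n+n} {0..<n+n}"
  by (rule bij_betw_byWitness[of _ "ps n"]) (auto simp: ps_def)

lemma iso_KAB: "graph_iso {0..<n+n} (KA n n) (KB n n)"
  apply (rule iso_by[OF ps_bij])
  by (auto simp: KA_def KB_def Kbip_def ps_def)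

lemma iso_SAB0: "0 < n \<Longrightarrow> graph_iso {0..<n+n} (SA n n 0) (SB n n n)"
  apply (rule iso_by[OF ps_bij])
  by (auto simp: SA_def SB_def ps_def)

lemma univs_char:
  assumes "S \<subseteq> V" "\<And>u. u\<in>S \<Longrightarrow> \<forall>x\<in>V. x\<noteq>u \<longrightarrow> (u,x)\<in>E"
    "\<And>u. u\<in>V \<Longrightarrow> u\<notin>S \<Longrightarrow> \<exists>x\<in>V. x\<noteq>u \<and> (u,x)\<notin>E"
  shows "univs V E = S"
  using assms unfolding univs_def by blast

lemma leaves_char:
  assumes "S \<subseteq> V" "\<And>u. u\<in>S \<Longrightarrow> \<exists>x\<in>V. (u,x)\<in>E \<and> (\<forall>y\<in>V. (u,y)\<in>E \<longrightarrow> y=x)"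
    "\<And>u. u\<in>V \<Longrightarrow> u\<notin>S \<Longrightarrow> \<exists>x\<in>V. \<exists>y\<in>V. x\<noteq>y \<and> (u,x)\<in>E \<and> (u,y)\<in>E"
  shows "leaves V E = S"
proof -
  have "u \<in> leaves V E \<longleftrightarrow> u \<in> S" for u
  proof
    assume u: "u \<in> leaves V E"
    show "u \<in> S"
    proof (rule ccontr)
      assume "u \<notin> S"
      then obtain x y where "x\<in>V" "y\<in>V" "x\<noteq>y" "(u,x)\<in>E" "(u,y)\<in>E" using assms(3) u
        unfolding leaves_def by blast
      then show False using u unfolding leaves_def by blast
    qed
  next
    assume u: "u \<in> S"
    then obtain x where "x\<in>V" "(u,x)\<in>E" "\<forall>y\<in>V. (u,y)\<in>E \<longrightarrow> y=x" using assms(2) by blast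
    then show "u \<in> leaves V E" using u assms(1) unfolding leaves_def by blast
  qed
  then show ?thesis by blast
qed


lemma exA: "2 \<le> n \<Longrightarrow> \<exists>x::nat. x < n \<and> x \<noteq> u"
proof (cases "u = 0")
  case True assume "2 \<le> n" then show ?thesis using True by (intro exI[of _ 1]) simp
next
  case False assume "2 \<le> n" then show ?thesis using False by (intro exI[of _ 0]) simp
qed
lemma exB: "2 \<le> m \<Longrightarrow> \<exists>x::nat. n \<le> x \<and> x < n + m \<and> x \<noteq> u"
proof (cases "u = n")
  case True assume "2 \<le> m" then show ?thesis using True by (intro exI[of _ "n+1"]) simp
next
  case False assume "2 \<le> m" then show ?thesis using False by (intro exI[of _ n]) simp
qed

context fixes n m :: nat assumes n2: "2 \<le> n" and m2: "2 \<le> m"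
begin

lemma univs_K: "univs {0..<n+m} (Kbip n m) = {}"
proof (rule univs_char)
  fix u assume u: "u \<in> {0..<n+m}"
  show "\<exists>x\<in>{0..<n+m}. x\<noteq>u \<and> (u,x)\<notin>Kbip n m"
  proof (cases "u<n")
    case True
    obtain x where "x<n" "x\<noteq>u" using exA[OF n2] by blast
    then show ?thesis using True by (intro bexI[of _ x]) (auto simp: Kbip_def)
  next
    case False
    obtain x where "n\<le>x" "x<n+m" "x\<noteq>u" using exB[OF m2] by blast
    then show ?thesis using False by (intro bexI[of _ x]) (auto simp: Kbip_def)
  qed
qed auto

lemma leaves_K: "leaves {0..<n+m} (Kbip n m) = {}"
proof (rule leaves_char)
  fix u assume u: "u \<in> {0..<n+m}"
  show "\<exists>x\<in>{0..<n+m}. \<exists>y\<in>{0..<n+m}. x\<noteq>y \<and> (u,x)\<in>Kbip n m \<and> (u,y)\<in>Kbip n m"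
  proof (cases "u<n")
    case True
    then show ?thesis using n2 m2 by (intro bexI[of _ n] bexI[of _ "n+1"]) (auto simp: Kbip_def)
  next
    case False
    then show ?thesis using n2 m2 u by (intro bexI[of _ 0] bexI[of _ 1]) (auto simp: Kbip_def)
  qed
qed auto

lemma univs_KA: "univs {0..<n+m} (KA n m) = {0..<n}"
proof (rule univs_char)
  fix u assume u: "u \<in> {0..<n+m}" "u \<notin> {0..<n}"
  obtain x where "n\<le>x" "x<n+m" "x\<noteq>u" using exB[OF m2] by blast
  then show "\<exists>x\<in>{0..<n+m}. x\<noteq>u \<and> (u,x)\<notin>KA n m" using u by (intro bexI[of _ x]) (auto simp: KA_def Kbip_def)
qed (auto simp: KA_def Kbip_def)

lemma leaves_KA: "leaves {0..<n+m} (KA n m) = {}"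
proof (rule leaves_char)
  fix u assume u: "u \<in> {0..<n+m}"
  show "\<exists>x\<in>{0..<n+m}. \<exists>y\<in>{0..<n+m}. x\<noteq>y \<and> (u,x)\<in>KA n m \<and> (u,y)\<in>KA n m"
  proof (cases "u<n")
    case True
    then show ?thesis using n2 m2 by (intro bexI[of _ n] bexI[of _ "n+1"]) (auto simp: KA_def Kbip_def)
  next
    case False
    then show ?thesis using n2 m2 u by (intro bexI[of _ 0] bexI[of _ 1]) (auto simp: KA_def Kbip_def)
  qed
qed auto

lemma univs_KB: "univs {0..<n+m} (KB n m) = {n..<n+m}"
proof (rule univs_char)
  fix u assume u: "u \<in> {0..<n+m}" "u \<notin> {n..<n+m}"
  obtain x where "x<n" "x\<noteq>u" using exA[OF n2] by blast
  then show "\<exists>x\<in>{0..<n+m}. x\<noteq>u \<and> (u,x)\<notin>KB n m" using u by (intro bexI[of _ x]) (auto simp: KB_def Kbip_def)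
qed (auto simp: KB_def Kbip_def)

lemma leaves_KB: "leaves {0..<n+m} (KB n m) = {}"
proof (rule leaves_char)
  fix u assume u: "u \<in> {0..<n+m}"
  show "\<exists>x\<in>{0..<n+m}. \<exists>y\<in>{0..<n+m}. x\<noteq>y \<and> (u,x)\<in>KB n m \<and> (u,y)\<in>KB n m"
  proof (cases "u<n")
    case True
    then show ?thesis using n2 m2 by (intro bexI[of _ n] bexI[of _ "n+1"]) (auto simp: KB_def Kbip_def)
  next
    case False
    then show ?thesis using n2 m2 u by (intro bexI[of _ 0] bexI[of _ 1]) (auto simp: KB_def Kbip_def)
  qed
qed auto

lemma univs_SA: assumes a: "a < n" shows "univs {0..<n+m} (SA n m a) = {a}"
proof (rule univs_char)
  fix u assume u: "u \<in> {0..<n+m}" "u \<notin> {a}"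
  show "\<exists>x\<in>{0..<n+m}. x\<noteq>u \<and> (u,x)\<notin>SA n m a"
  proof (cases "u<n")
    case True
    then show ?thesis using u a m2 by (intro bexI[of _ n]) (auto simp: SA_def)
  next
    case False
    obtain x where "x<n" "x\<noteq>a" using exA[OF n2] by blast
    then show ?thesis using False u by (intro bexI[of _ x]) (auto simp: SA_def)
  qed
qed (use a in \<open>auto simp: SA_def\<close>)

lemma leaves_SA: assumes a: "a < n" shows "leaves {0..<n+m} (SA n m a) = {0..<n} - {a}"
proof (rule leaves_char)
  fix u assume u: "u \<in> {0..<n+m}" "u \<notin> {0..<n} - {a}"
  show "\<exists>x\<in>{0..<n+m}. \<exists>y\<in>{0..<n+m}. x\<noteq>y \<and> (u,x)\<in>SA n m a \<and> (u,y)\<in>SA n m a"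
  proof (cases "u = a")
    case True
    then show ?thesis using n2 m2 a by (intro bexI[of _ n] bexI[of _ "n+1"]) (auto simp: SA_def)
  next
    case False
    then have "n \<le> u" using u by auto
    obtain x where "n\<le>x" "x<n+m" "x\<noteq>u" using exB[OF m2] by blast
    then show ?thesis using False u a \<open>n \<le> u\<close> by (intro bexI[of _ a] bexI[of _ x]) (auto simp: SA_def)
  qed
next
  fix u assume "u \<in> {0..<n} - {a}"
  then show "\<exists>x\<in>{0..<n+m}. (u,x)\<in>SA n m a \<and> (\<forall>y\<in>{0..<n+m}. (u,y)\<in>SA n m a \<longrightarrow> y=x)"
    using a by (intro bexI[of _ a]) (auto simp: SA_def)
qed auto

lemma univs_SB: assumes b: "n \<le> b" "b < n+m" shows "univs {0..<n+m} (SB n m b) = {b}"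
proof (rule univs_char)
  fix u assume u: "u \<in> {0..<n+m}" "u \<notin> {b}"
  show "\<exists>x\<in>{0..<n+m}. x\<noteq>u \<and> (u,x)\<notin>SB n m b"
  proof (cases "u<n")
    case False
    then show ?thesis using u b n2 by (intro bexI[of _ 0]) (auto simp: SB_def)
  next
    case True
    obtain x where "n\<le>x" "x<n+m" "x\<noteq>b" using exB[OF m2] by blast
    then show ?thesis using True u by (intro bexI[of _ x]) (auto simp: SB_def)
  qed
qed (use b in \<open>auto simp: SB_def\<close>)

lemma leaves_SB: assumes b: "n \<le> b" "b < n+m" shows "leaves {0..<n+m} (SB n m b) = {n..<n+m} - {b}"
proof (rule leaves_char)
  fix u assume u: "u \<in> {0..<n+m}" "u \<notin> {n..<n+m} - {b}"
  show "\<exists>x\<in>{0..<n+m}. \<exists>y\<in>{0..<n+m}. x\<noteq>y \<and> (u,x)\<in>SB n m b \<and> (u,y)\<in>SB n m b"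
  proof (cases "u = b")
    case True
    then show ?thesis using n2 m2 b by (intro bexI[of _ 0] bexI[of _ 1]) (auto simp: SB_def)
  next
    case False
    then have "u < n" using u by auto
    obtain x where "x<n" "x\<noteq>u" using exA[OF n2] by blast
    then show ?thesis using False u b \<open>u < n\<close> by (intro bexI[of _ b] bexI[of _ x]) (auto simp: SB_def)
  qed
next
  fix u assume "u \<in> {n..<n+m} - {b}"
  then show "\<exists>x\<in>{0..<n+m}. (u,x)\<in>SB n m b \<and> (\<forall>y\<in>{0..<n+m}. (u,y)\<in>SB n m b \<longrightarrow> y=x)"
    using b by (intro bexI[of _ b]) (auto simp: SB_def)
qed auto

lemma univs_DD: assumes ab: "a < n" "n \<le> b" "b < n+m" shows "univs {0..<n+m} (DD n m a b) = {}"
proof (rule univs_char)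
  fix u assume u: "u \<in> {0..<n+m}"
  show "\<exists>x\<in>{0..<n+m}. x\<noteq>u \<and> (u,x)\<notin>DD n m a b"
  proof (cases "u = a")
    case True
    obtain x where "n\<le>x" "x<n+m" "x\<noteq>b" using exB[OF m2] by blast
    then show ?thesis using True ab by (intro bexI[of _ x]) (auto simp: DD_def)
  next
    case ua: False
    show ?thesis
    proof (cases "u = b")
      case True
      obtain x where "x<n" "x\<noteq>a" using exA[OF n2] by blast
      then show ?thesis using True ab by (intro bexI[of _ x]) (auto simp: DD_def)
    next
      case ub: False
      show ?thesis
      proof (cases "u < n")
        case True
        then show ?thesis using ua ub ab by (intro bexI[of _ b]) (auto simp: DD_def)
      next
        case False
        then show ?thesis using ua ub ab by (intro bexI[of _ a]) (auto simp: DD_def)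
      qed
    qed
  qed
qed auto

lemma leaves_DD: assumes ab: "a < n" "n \<le> b" "b < n+m"
  shows "leaves {0..<n+m} (DD n m a b) = {0..<n+m} - {a,b}"
proof (rule leaves_char)
  fix u assume u: "u \<in> {0..<n+m}" "u \<notin> {0..<n+m} - {a,b}"
  show "\<exists>x\<in>{0..<n+m}. \<exists>y\<in>{0..<n+m}. x\<noteq>y \<and> (u,x)\<in>DD n m a b \<and> (u,y)\<in>DD n m a b"
  proof (cases "u = a")
    case True
    obtain x where "x<n" "x\<noteq>a" using exA[OF n2] by blast
    then show ?thesis using True ab by (intro bexI[of _ b] bexI[of _ x]) (auto simp: DD_def)
  next
    case False
    then have "u = b" using u by auto
    obtain x where "n\<le>x" "x<n+m" "x\<noteq>b" using exB[OF m2] by blast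
    then show ?thesis using \<open>u = b\<close> ab by (intro bexI[of _ a] bexI[of _ x]) (auto simp: DD_def)
  qed
next
  fix u assume u: "u \<in> {0..<n+m} - {a,b}"
  show "\<exists>x\<in>{0..<n+m}. (u,x)\<in>DD n m a b \<and> (\<forall>y\<in>{0..<n+m}. (u,y)\<in>DD n m a b \<longrightarrow> y=x)"
  proof (cases "u < n")
    case True
    then show ?thesis using u ab by (intro bexI[of _ a]) (auto simp: DD_def)
  next
    case False
    then show ?thesis using u ab by (intro bexI[of _ b]) (auto simp: DD_def)
  qed
qed auto

end

lemma iso_DD:
  assumes "a<n" "a'<n" "n\<le>b" "b<n+m" "n\<le>b'" "b'<n+m"
  shows "graph_iso {0..<n+m} (DD n m a b) (DD n m a' b')"
  using graph_iso_trans[OF iso_DD1[of a n a' b m] iso_DD2[of a' n b m b']] assms by simp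

lemma iso_KAB': "n = m \<Longrightarrow> graph_iso {0..<n+m} (KA n m) (KB n m)"
  using iso_KAB[of n] by simp
lemma iso_KBA': "n = m \<Longrightarrow> graph_iso {0..<n+m} (KB n m) (KA n m)"
  using graph_iso_sym[OF iso_KAB[of n]] by simp

lemma iso_SAB': assumes "n = m" "a<n" "n\<le>b" "b<n+m"
  shows "graph_iso {0..<n+m} (SA n m a) (SB n m b)"
proof -
  have 0: "graph_iso {0..<n+n} (SA n n a) (SA n n 0)" using iso_SA[of a n 0 n] assms by simp
  have 1: "graph_iso {0..<n+n} (SA n n 0) (SB n n n)" using iso_SAB0[of n] assms by simp
  have 2: "graph_iso {0..<n+n} (SB n n n) (SB n n b)" using iso_SB[of n n n b] assms by simp
  show ?thesis using graph_iso_trans[OF graph_iso_trans[OF 0 1] 2] assms(1) by simp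
qed
lemma iso_SBA': assumes "n = m" "a<n" "n\<le>b" "b<n+m"
  shows "graph_iso {0..<n+m} (SB n m b) (SA n m a)"
  using graph_iso_sym[OF iso_SAB'[OF assms]] .

lemma card_quot:
  assumes "\<And>x y. x\<in>S \<Longrightarrow> y\<in>S \<Longrightarrow> (x,y)\<in>R \<longleftrightarrow> t x = t y" "R \<subseteq> S\<times>S"
  shows "card (S//R) = card (t ` S)"
proof -
  have cls: "\<And>x. x\<in>S \<Longrightarrow> R``{x} = {y\<in>S. t y = t x}" using assms by auto
  have "S//R = (\<lambda>v. {y\<in>S. t y = v}) ` (t ` S)" unfolding quotient_def using cls by auto
  moreover have "inj_on (\<lambda>v. {y\<in>S. t y = v}) (t ` S)"
  proof (rule inj_onI)
    fix v w assume "v \<in> t ` S" "w \<in> t ` S" and eq: "{y\<in>S. t y = v} = {y\<in>S. t y = w}"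
    then obtain x where "x\<in>S" "v = t x" by auto
    then have "x \<in> {y\<in>S. t y = w}" using eq by auto
    then show "v = w" using \<open>v = t x\<close> by simp
  qed
  ultimately show ?thesis by (simp add: card_image)
qed

context fixes n m :: nat assumes n2: "2 \<le> n" and m2: "2 \<le> m"
begin

lemma tv_K: "tinv {0..<n+m} (Kbip n m) = (0,0)"
  unfolding tinv_def using univs_K[OF n2 m2] leaves_K[OF n2 m2] by simp
lemma tv_KA: "tinv {0..<n+m} (KA n m) = (n,0)"
  unfolding tinv_def using univs_KA[OF n2 m2] leaves_KA[OF n2 m2] by simp
lemma tv_KB: "tinv {0..<n+m} (KB n m) = (m,0)"
  unfolding tinv_def using univs_KB[OF n2 m2] leaves_KB[OF n2 m2] by simp
lemma tv_SA: "a<n \<Longrightarrow> tinv {0..<n+m} (SA n m a) = (1,n-1)"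
  unfolding tinv_def using univs_SA[OF n2 m2] leaves_SA[OF n2 m2] by simp
lemma tv_SB: "n\<le>b \<Longrightarrow> b<n+m \<Longrightarrow> tinv {0..<n+m} (SB n m b) = (1,m-1)"
  unfolding tinv_def using univs_SB[OF n2 m2] leaves_SB[OF n2 m2] by simp
lemma tv_DD: assumes "a<n" "n\<le>b" "b<n+m" shows "tinv {0..<n+m} (DD n m a b) = (0,n+m-2)"
proof -
  have "card ({0..<n+m} - {a,b}) = n+m-2"
    using assms by (subst card_Diff_subset) auto
  then show ?thesis unfolding tinv_def using univs_DD[OF n2 m2 assms] leaves_DD[OF n2 m2 assms] by simp
qed

lemma fam:
  assumes "E \<in> LCO n m"
  shows "E = Kbip n m \<or> E = KA n m \<or> E = KB n m \<or> (\<exists>a b. a<n \<and> n\<le>b \<and> b<n+m \<and> E = DD n m a b)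
     \<or> (\<exists>a. a<n \<and> E = SA n m a) \<or> (\<exists>b. n\<le>b \<and> b<n+m \<and> E = SB n m b)"
  using assms unfolding LCO_def by auto

lemma iso_iff:
  assumes "E \<in> LCO n m" "E' \<in> LCO n m"
  shows "graph_iso {0..<n+m} E E' \<longleftrightarrow> tinv {0..<n+m} E = tinv {0..<n+m} E'"
proof
  assume "graph_iso {0..<n+m} E E'" then show "tinv {0..<n+m} E = tinv {0..<n+m} E'" by (rule iso_tinv)
next
  assume T: "tinv {0..<n+m} E = tinv {0..<n+m} E'"
  from fam[OF assms(1)] fam[OF assms(2)] T n2 m2 show "graph_iso {0..<n+m} E E'"
    by (elim disjE exE conjE; simp add: tv_K tv_KA tv_KB tv_SA tv_SB tv_DD;
        auto intro: graph_iso_refl iso_DD iso_SA iso_SB iso_KAB' iso_KBA' iso_SAB' iso_SBA')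
qed

lemma tv_image: "tinv {0..<n+m} ` LCO n m = {(0,0),(n,0),(m,0),(0,n+m-2),(1,n-1),(1,m-1)}"
proof
  show "tinv {0..<n+m} ` LCO n m \<subseteq> {(0,0),(n,0),(m,0),(0,n+m-2),(1,n-1),(1,m-1)}"
  proof
    fix t assume "t \<in> tinv {0..<n+m} ` LCO n m"
    then obtain E where E: "E \<in> LCO n m" "t = tinv {0..<n+m} E" by auto
    from fam[OF E(1)] show "t \<in> {(0,0),(n,0),(m,0),(0,n+m-2),(1,n-1),(1,m-1)}"
      by (elim disjE exE conjE; simp add: E(2) tv_K tv_KA tv_KB tv_SA tv_SB tv_DD)
  qed
next
  have 1: "Kbip n m \<in> LCO n m" "KA n m \<in> LCO n m" "KB n m \<in> LCO n m" unfolding LCO_def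
      apply (rule UnI1, rule UnI1, rule UnI1, rule insertI1)
     apply (rule UnI1, rule UnI1, rule UnI1, rule insertI2, rule insertI1)
    apply (rule UnI1, rule UnI1, rule UnI1, rule insertI2, rule insertI2, rule insertI1)
    done
  have 2: "DD n m 0 n \<in> LCO n m" "SA n m 0 \<in> LCO n m" "SB n m n \<in> LCO n m"
    unfolding LCO_def
      apply (rule UnI1, rule UnI1, rule UnI2, rule CollectI, rule exI[of _ 0], rule exI[of _ n]) using n2 m2 apply simp
     apply (rule UnI1, rule UnI2, rule imageI) using n2 apply simp
    apply (rule UnI2, rule imageI) using m2 apply simp
    done
  have 3: "tinv {0..<n+m} (DD n m 0 n) = (0,n+m-2)" "tinv {0..<n+m} (SA n m 0) = (1,n-1)"
    "tinv {0..<n+m} (SB n m n) = (1,m-1)"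
    using n2 m2 tv_DD[of 0 n] tv_SA[of 0] tv_SB[of n] by simp_all
  note e = image_eqI[where f="tinv {0..<n+m}", OF tv_K[symmetric] 1(1)] image_eqI[where f="tinv {0..<n+m}", OF tv_KA[symmetric] 1(2)]
    image_eqI[where f="tinv {0..<n+m}", OF tv_KB[symmetric] 1(3)] image_eqI[where f="tinv {0..<n+m}", OF 3(1)[symmetric] 2(1)]
    image_eqI[where f="tinv {0..<n+m}", OF 3(2)[symmetric] 2(2)] image_eqI[where f="tinv {0..<n+m}", OF 3(3)[symmetric] 2(3)]
  show "{(0,0),(n,0),(m,0),(0,n+m-2),(1,n-1),(1,m-1)} \<subseteq> tinv {0..<n+m} ` LCO n m"
    unfolding insert_subset using e by (intro conjI empty_subsetI)
qed

end

theorem theorem6: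
  fixes n m :: nat
  assumes "n \<ge> 2" and "m \<ge> 2"
  shows "num_iso_classes (Kbip_vertices n m) (lc_orbit (Kbip_vertices n m) (Kbip n m))
           = (if n \<noteq> m then 6 else 4)"
proof -
  have O: "lc_orbit (Kbip_vertices n m) (Kbip n m) = LCO n m" using orbit_eq assms by simp
  have V: "Kbip_vertices n m = {0..<n+m}" by (simp add: Kbip_vertices_def)
  have "num_iso_classes {0..<n+m} (LCO n m) = card (tinv {0..<n+m} ` LCO n m)"
    unfolding num_iso_classes_def
    by (rule card_quot) (use iso_iff[OF assms] in auto)
  also have "\<dots> = (if n \<noteq> m then 6 else 4)"
    unfolding tv_image[OF assms] using assms by auto
  finally show ?thesis using O V by simp
qed


end
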